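(* Let $A_1,\dots,A_m\in\mathbb{C}^{n\times n}$ be Hermitian matrices. There exists $P\in\mathrm{GL}_n(\mathbb{C})$ such that $P^*A_iP$ is diagonal for every $1\le i\le m$ if and only if $Z(A_1,\dots,A_m)$ contains $n$ nonzero matrices $\epsilon_1,\dots,\epsilon_n$ with $\epsilon_j^2=\epsilon_j$, $\epsilon_j\epsilon_l=0$ for $j\neq l$, and $\epsilon_1+\cdots+\epsilon_n=I_n$.
   Context: For Hermitian $A_1,\dots,A_m\in\mathbb{C}^{n\times n}$, the center is $Z(A_1,\dots,A_m)=\{X\in\mathbb{C}^{n\times n} : (A_iX)^*=A_iX \text{ for all } i\}$, where $^*$ denotes conjugate transpose. *)

theory Defs
  imports "HOL-Analysis.Analysis"
begin

definition ctrans :: "complex^'n^'n \<Rightarrow> complex^'n^'n" where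
  "ctrans A = (\<chi> i j. cnj (A $ j $ i))"

definition hermitian :: "complex^'n^'n \<Rightarrow> bool" where
  "hermitian A \<longleftrightarrow> ctrans A = A"

definition diagonal_mat :: "complex^'n^'n \<Rightarrow> bool" where
  "diagonal_mat A \<longleftrightarrow> (\<forall>i j. i \<noteq> j \<longrightarrow> A $ i $ j = 0)"

definition center :: "nat \<Rightarrow> (nat \<Rightarrow> complex^'n^'n) \<Rightarrow> (complex^'n^'n) set" where
  "center m A = {X. \<forall>i<m. ctrans (A i ** X) = A i ** X}"

end

theory Submission
  imports Defs
begin

definition Eu :: "'n \<Rightarrow> complex^'n^'n" where
  "Eu j = (\<chi> r s. if r = j \<and> s = j then 1 else 0)"

lemma sum_delta_r: "(\<Sum>k\<in>UNIV. f k * (if k = j then 1 else 0)) = (f (j::'n::finite)::complex)"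
  by (subst sum.cong[OF refl, of _ _ "\<lambda>k. if k = j then f k else 0"]) auto

lemma mul_Eu: "((M::complex^'n^'n) ** Eu j) $ r $ s = (if s = j then M $ r $ j else 0)"
  by (cases "s = j") (simp_all add: matrix_matrix_mult_def Eu_def mult_if_delta sum_delta_r)

lemma Eu_mul: "(Eu j ** (M::complex^'n^'n)) $ r $ s = (if r = j then M $ j $ s else 0)"
  by (cases "r = j") (simp_all add: matrix_matrix_mult_def Eu_def mult_if_delta)

lemma matrix_add_rdistrib: "((A::complex^'n^'n) + B) ** C = A ** C + B ** C"
  by (simp add: vec_eq_iff matrix_matrix_mult_def distrib_right sum.distrib)

lemma Eu_idem: "Eu j ** Eu j = Eu j"
  by (simp add: vec_eq_iff mul_Eu) (simp add: Eu_def)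

lemma Eu_orth: "j \<noteq> l \<Longrightarrow> Eu j ** Eu l = 0"
  by (simp add: vec_eq_iff mul_Eu) (simp add: Eu_def)

lemma Eu_nz: "Eu j \<noteq> 0"
  by (simp add: vec_eq_iff Eu_def)

lemma Eu_sum: "(\<Sum>j\<in>UNIV. Eu j) = (mat 1 :: complex^'n^'n)"
  by (auto simp add: vec_eq_iff Eu_def mat_def sum_component intro!: sum.neutral)

lemma ctrans_mul: "ctrans ((A::complex^'n^'n) ** B) = ctrans B ** ctrans A"
  by (simp add: vec_eq_iff ctrans_def matrix_matrix_mult_def mult.commute)

lemma ctrans_ctrans: "ctrans (ctrans A) = A"
  by (simp add: vec_eq_iff ctrans_def)

lemma ctrans_zero: "ctrans 0 = 0"
  by (simp add: vec_eq_iff ctrans_def)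

lemma ctrans_Eu: "ctrans (Eu j) = Eu j"
  by (simp add: vec_eq_iff ctrans_def Eu_def)

lemma sum_rmul: "finite S \<Longrightarrow> (\<Sum>j\<in>S. (f j::complex^'n^'n)) ** (B::complex^'n^'n) = (\<Sum>j\<in>S. f j ** B)"
  by (induction S rule: finite_induct) (auto simp: matrix_add_rdistrib)

lemma sum_lmul: "finite S \<Longrightarrow> (B::complex^'n^'n) ** (\<Sum>j\<in>S. (f j::complex^'n^'n)) = (\<Sum>j\<in>S. B ** f j)"
  by (induction S rule: finite_induct) (auto simp: matrix_add_ldistrib)

lemma diag_Eu: "diagonal_mat D \<Longrightarrow> D ** Eu j = Eu j ** D ** Eu j"
  by (simp add: vec_eq_iff mul_Eu Eu_mul diagonal_mat_def)

lemma entry_zero: "Eu k ** M ** Eu j = 0 \<Longrightarrow> (M::complex^'n^'n) $ k $ j = 0"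
proof -
  assume "Eu k ** M ** Eu j = 0"
  then have "(Eu k ** M ** Eu j) $ k $ j = 0" by simp
  then show ?thesis by (simp add: mul_Eu Eu_mul)
qed

lemma forward:
  fixes m :: nat and A :: "nat \<Rightarrow> complex^'n^'n"
  assumes herm: "\<forall>i<m. hermitian (A i)"
    and inv: "invertible P" and diag: "\<forall>i<m. diagonal_mat (ctrans P ** A i ** P)"
  shows "\<exists>\<epsilon> :: 'n \<Rightarrow> complex^'n^'n.
            (\<forall>j. \<epsilon> j \<in> center m A \<and> \<epsilon> j \<noteq> 0 \<and> \<epsilon> j ** \<epsilon> j = \<epsilon> j)
          \<and> (\<forall>j l. j \<noteq> l \<longrightarrow> \<epsilon> j ** \<epsilon> l = 0)
          \<and> (\<Sum>j\<in>UNIV. \<epsilon> j) = mat 1"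
proof -
  obtain Q where PQ: "P ** Q = mat 1" and QP: "Q ** P = mat 1"
    using inv unfolding invertible_def by blast
  define e where "e j = P ** Eu j ** Q" for j
  have idem: "e j ** e j = e j" for j
  proof -
    have "e j ** e j = P ** Eu j ** (Q ** P) ** Eu j ** Q"
      by (simp add: e_def matrix_mul_assoc)
    also have "\<dots> = e j" by (simp add: QP Eu_idem e_def matrix_mul_assoc[symmetric])
    finally show ?thesis .
  qed
  have orth: "e j ** e l = 0" if "j \<noteq> l" for j l
  proof -
    have "e j ** e l = P ** Eu j ** (Q ** P) ** Eu l ** Q"
      by (simp add: e_def matrix_mul_assoc)
    also have "\<dots> = 0" using Eu_orth[OF that] by (simp add: QP matrix_mul_assoc[symmetric])
    finally show ?thesis .
  qed
  have nz: "e j \<noteq> 0" for j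
  proof
    assume "e j = 0"
    then have "Q ** e j ** P = 0" by simp
    moreover have "Q ** e j ** P = (Q ** P) ** Eu j ** (Q ** P)"
      by (simp add: e_def matrix_mul_assoc)
    ultimately show False using Eu_nz[of j] by (simp add: QP)
  qed
  have sum: "(\<Sum>j\<in>UNIV. e j) = mat 1"
  proof -
    have "(\<Sum>j\<in>UNIV. e j) = (\<Sum>j\<in>UNIV. P ** Eu j) ** Q"
      by (simp add: sum_rmul e_def)
    also have "\<dots> = P ** (\<Sum>j\<in>UNIV. Eu j) ** Q" by (simp add: sum_lmul)
    finally show ?thesis by (simp add: Eu_sum PQ)
  qed
  have cen: "e j \<in> center m A" for j
    unfolding center_def
  proof (intro CollectI allI impI)
    fix i assume i: "i < m"
    define D where "D = ctrans P ** A i ** P"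
    have hA: "ctrans (A i) = A i" using herm i by (simp add: hermitian_def)
    have hD: "ctrans D = D" by (simp add: D_def ctrans_mul ctrans_ctrans hA matrix_mul_assoc)
    have dD: "diagonal_mat D" using diag i by (simp add: D_def)
    have AD: "A i = ctrans Q ** D ** Q"
    proof -
      have "ctrans Q ** D ** Q = ctrans (P ** Q) ** A i ** (P ** Q)"
        by (simp add: D_def ctrans_mul matrix_mul_assoc)
      also have "ctrans (P ** Q) = mat 1" using PQ
        by (simp add: ctrans_def mat_def vec_eq_iff)
      finally show ?thesis by (simp add: PQ)
    qed
    have "A i ** e j = ctrans Q ** (D ** Eu j) ** Q"
    proof -
      have "A i ** e j = ctrans Q ** D ** (Q ** P) ** Eu j ** Q"
        by (simp add: AD e_def matrix_mul_assoc)
      then show ?thesis by (simp add: QP matrix_mul_assoc)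
    qed
    also have "\<dots> = ctrans Q ** (Eu j ** D ** Eu j) ** Q" using diag_Eu[OF dD] by simp
    finally have eq: "A i ** e j = ctrans Q ** (Eu j ** D ** Eu j) ** Q" .
    have "ctrans (Eu j ** D ** Eu j) = Eu j ** D ** Eu j"
      by (simp add: ctrans_mul ctrans_Eu hD matrix_mul_assoc)
    then show "ctrans (A i ** e j) = A i ** e j"
      unfolding eq by (simp add: ctrans_mul ctrans_ctrans matrix_mul_assoc)
  qed
  show ?thesis by (intro exI[of _ e]) (simp add: idem orth nz sum cen)
qed

lemma backward:
  fixes m :: nat and A :: "nat \<Rightarrow> complex^'n^'n" and e :: "'n \<Rightarrow> complex^'n^'n"
  assumes ee: "\<forall>j. e j \<in> center m A \<and> e j \<noteq> 0 \<and> e j ** e j = e j"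
    and orth: "\<forall>j l. j \<noteq> l \<longrightarrow> e j ** e l = 0"
  shows "\<exists>P. invertible P \<and> (\<forall>i<m. diagonal_mat (ctrans P ** A i ** P))"
proof -
  have "\<forall>j. \<exists>c r. e j $ r $ c \<noteq> 0"
  proof
    fix j
    show "\<exists>c r. e j $ r $ c \<noteq> 0"
    proof (rule ccontr)
      assume "\<not> ?thesis"
      then have "e j = 0" by (simp add: vec_eq_iff)
      then show False using ee by blast
    qed
  qed
  then obtain c where c: "\<And>j. \<exists>r. e j $ r $ c j \<noteq> 0" by metis
  define P :: "complex^'n^'n" where "P = (\<chi> r j. e j $ r $ c j)"
  have eP: "e k ** P = P ** Eu k" for k
  proof -
    have 1: "(e k ** P) $ r $ s = (e k ** e s) $ r $ c s" for r s
      by (simp add: matrix_matrix_mult_def P_def)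
    show ?thesis
      unfolding vec_eq_iff
    proof (intro allI)
      fix r s
      show "(e k ** P) $ r $ s = (P ** Eu k) $ r $ s"
      proof (cases "s = k")
        case True then show ?thesis using ee by (simp add: 1 mul_Eu) (simp add: P_def)
      next
        case False then show ?thesis using orth by (simp add: 1 mul_Eu)
      qed
    qed
  qed
  have inv: "invertible P"
    unfolding invertible_left_inverse matrix_left_invertible_ker
  proof (intro allI impI)
    fix x assume Px: "P *v x = 0"
    show "x = 0"
    proof (subst vec_eq_iff, intro allI)
      fix k
      have "(P ** Eu k) *v x = e k *v (P *v x)"
        by (simp add: eP matrix_vector_mul_assoc)
      then have z: "(P ** Eu k) *v x = 0" by (simp add: Px)
      have comp: "((P ** Eu k) *v x) $ r = P $ r $ k * x $ k" for r
        apply (simp add: matrix_vector_mult_def mul_Eu)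
        apply (subst sum.cong[OF refl, of _ _ "\<lambda>j. if j = k then P $ r $ k * x $ k else 0"])
         apply auto
        done
      obtain r where r: "e k $ r $ c k \<noteq> 0" using c by blast
      have "P $ r $ k * x $ k = 0" using z comp[of r] by simp
      then show "x $ k = 0 $ k" using r by (simp add: P_def)
    qed
  qed
  have diag: "diagonal_mat (ctrans P ** A i ** P)" if i: "i < m" for i
    unfolding diagonal_mat_def
  proof (intro allI impI)
    fix k j :: 'n assume kj: "k \<noteq> j"
    have cen: "ctrans (A i ** e j) = A i ** e j"
      using ee i by (simp add: center_def)
    have "Eu k ** (ctrans P ** A i ** P) ** Eu j = ctrans (P ** Eu k) ** A i ** (P ** Eu j)"
      by (simp add: ctrans_mul ctrans_Eu matrix_mul_assoc)
    also have "\<dots> = ctrans P ** ctrans (e k) ** (A i ** e j) ** P"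
      by (simp add: eP[symmetric] ctrans_mul matrix_mul_assoc)
    also have "\<dots> = ctrans P ** ctrans (e k) ** ctrans (A i ** e j) ** P"
      by (simp add: cen)
    also have "\<dots> = ctrans P ** ctrans (A i ** (e j ** e k)) ** P"
      by (simp add: ctrans_mul matrix_mul_assoc)
    also have "\<dots> = 0"
      using orth kj by (simp add: ctrans_zero)
    finally show "(ctrans P ** A i ** P) $ k $ j = 0" by (rule entry_zero)
  qed
  show ?thesis using inv diag by blast
qed

theorem mainTheorem9:
  fixes m :: nat and A :: "nat \<Rightarrow> complex^'n^'n"
  assumes "\<forall>i<m. hermitian (A i)"
  shows "(\<exists>P. invertible P \<and> (\<forall>i<m. diagonal_mat (ctrans P ** A i ** P)))
     \<longleftrightarrow> (\<exists>\<epsilon> :: 'n \<Rightarrow> complex^'n^'n.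
            (\<forall>j. \<epsilon> j \<in> center m A \<and> \<epsilon> j \<noteq> 0 \<and> \<epsilon> j ** \<epsilon> j = \<epsilon> j)
          \<and> (\<forall>j l. j \<noteq> l \<longrightarrow> \<epsilon> j ** \<epsilon> l = 0)
          \<and> (\<Sum>j\<in>UNIV. \<epsilon> j) = mat 1)"
proof
  assume "\<exists>P. invertible P \<and> (\<forall>i<m. diagonal_mat (ctrans P ** A i ** P))"
  then obtain P where "invertible P" "\<forall>i<m. diagonal_mat (ctrans P ** A i ** P)" by blast
  then show "\<exists>\<epsilon> :: 'n \<Rightarrow> complex^'n^'n.
            (\<forall>j. \<epsilon> j \<in> center m A \<and> \<epsilon> j \<noteq> 0 \<and> \<epsilon> j ** \<epsilon> j = \<epsilon> j)
          \<and> (\<forall>j l. j \<noteq> l \<longrightarrow> \<epsilon> j ** \<epsilon> l = 0)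
          \<and> (\<Sum>j\<in>UNIV. \<epsilon> j) = mat 1"
    using forward[OF assms] by blast
next
  assume "\<exists>\<epsilon> :: 'n \<Rightarrow> complex^'n^'n.
            (\<forall>j. \<epsilon> j \<in> center m A \<and> \<epsilon> j \<noteq> 0 \<and> \<epsilon> j ** \<epsilon> j = \<epsilon> j)
          \<and> (\<forall>j l. j \<noteq> l \<longrightarrow> \<epsilon> j ** \<epsilon> l = 0)
          \<and> (\<Sum>j\<in>UNIV. \<epsilon> j) = mat 1"
  then obtain e :: "'n \<Rightarrow> complex^'n^'n" where
    "\<forall>j. e j \<in> center m A \<and> e j \<noteq> 0 \<and> e j ** e j = e j"
    "\<forall>j l. j \<noteq> l \<longrightarrow> e j ** e l = 0" by blast
  then show "\<exists>P. invertible P \<and> (\<forall>i<m. diagonal_mat (ctrans P ** A i ** P))"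
    by (rule backward)
qed

end
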